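(* Let $k_{11}>0$, $k_{22}>0$, $\nu\in\mathbb{R}$, and let $\mathbf{D}=\begin{pmatrix} d_{11}&d_{12}\\ d_{12}&d_{22}\end{pmatrix}$ be a real symmetric positive definite matrix. Consider the system $\ddot{\mathbf{q}}+\mathbf{D}\dot{\mathbf{q}}+(\mathbf{K}+\mathbf{N})\mathbf{q}=0$, $\mathbf{q}\in\mathbb{R}^2$, with $\mathbf{K}=\mathrm{diag}(k_{11},k_{22})$ and $\mathbf{N}=\begin{pmatrix}0&\nu\\-\nu&0\end{pmatrix}$. Then all roots $\lambda$ of $\det(\lambda^2\mathbf{I}+\lambda\mathbf{D}+\mathbf{K}+\mathbf{N})=0$ have negative real parts if and only if $$\nu^2<\frac{(k_{11}-k_{22})^2}{4}-\frac{(d_{11}-d_{22})^2(k_{11}-k_{22})^2-4(k_{11}d_{22}+k_{22}d_{11})(d_{11}d_{22}-d_{12}^2)(d_{11}+d_{22})}{4(d_{11}+d_{22})^2}.$$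
   Context: $\mathbf{I}$ denotes the $2\times2$ identity matrix. *)

theory Defs
  imports "HOL-Analysis.Analysis"
begin

definition mat2 :: "'a \<Rightarrow> 'a \<Rightarrow> 'a \<Rightarrow> 'a \<Rightarrow> 'a ^ 2 ^ 2" where
  "mat2 a b c d = (\<chi> i j. if i = 1 then (if j = 1 then a else b)
                          else (if j = 1 then c else d))"

definition pos_def :: "real ^ 'n ^ 'n \<Rightarrow> bool" where
  "pos_def A \<longleftrightarrow> transpose A = A \<and> (\<forall>x. x \<noteq> 0 \<longrightarrow> x \<bullet> (A *v x) > 0)"

definition cmat :: "real ^ 'n ^ 'm \<Rightarrow> complex ^ 'n ^ 'm" where
  "cmat A = (\<chi> i j. complex_of_real (A $ i $ j))"

end

theory Submission
  imports Defs "HOL-Computational_Algebra.Fundamental_Theorem_Algebra"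
begin

definition Pq :: "real \<Rightarrow> real \<Rightarrow> real \<Rightarrow> real \<Rightarrow> complex \<Rightarrow> complex" where
  "Pq a1 a2 a3 a4 z = z^4 + of_real a1 * z^3 + of_real a2 * z^2 + of_real a3 * z + of_real a4"

definition Cq :: "real \<Rightarrow> real \<Rightarrow> real \<Rightarrow> complex \<Rightarrow> complex" where
  "Cq g2 g1 g0 z = z^3 + of_real g2 * z^2 + of_real g1 * z + of_real g0"

lemma Pq_cnj: "cnj (Pq a1 a2 a3 a4 z) = Pq a1 a2 a3 a4 (cnj z)"
  by (simp add: Pq_def)

lemma Cq_cnj: "cnj (Cq g2 g1 g0 z) = Cq g2 g1 g0 (cnj z)"
  by (simp add: Cq_def)

lemma quartic_root:
  fixes c0 c1 c2 c3 :: complex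
  shows "\<exists>z. z^4 + c3*z^3 + c2*z^2 + c1*z + c0 = 0"
proof -
  have "\<not> constant (poly [:c0,c1,c2,c3,1:])" by (subst constant_degree) simp
  then obtain z where z: "poly [:c0,c1,c2,c3,1:] z = 0"
    using fundamental_theorem_of_algebra by blast
  have "poly [:c0,c1,c2,c3,1:] z = z^4 + c3*z^3 + c2*z^2 + c1*z + c0"
    by (simp add: eval_nat_numeral algebra_simps)
  with z show ?thesis by auto
qed

lemma cubic_root:
  fixes c0 c1 c2 :: complex
  shows "\<exists>z. z^3 + c2*z^2 + c1*z + c0 = 0"
proof -
  have "\<not> constant (poly [:c0,c1,c2,1:])" by (subst constant_degree) simp
  then obtain z where z: "poly [:c0,c1,c2,1:] z = 0"
    using fundamental_theorem_of_algebra by blast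
  have "poly [:c0,c1,c2,1:] z = z^3 + c2*z^2 + c1*z + c0"
    by (simp add: eval_nat_numeral algebra_simps)
  with z show ?thesis by auto
qed

lemma quad_div:
  fixes a1 a2 a3 a4 b c :: real and u v :: complex
  assumes neq: "u \<noteq> v" and s: "u + v = - of_real b" and p: "u * v = of_real c"
    and ru: "Pq a1 a2 a3 a4 u = 0" and rv: "Pq a1 a2 a3 a4 v = 0"
  shows "\<exists>b' c' e f. a1 = b'+e \<and> a2 = c'+f+b'*e \<and> a3 = b'*f+c'*e \<and> a4 = c'*f"
proof -
  define e where "e = a1 - b"
  define f where "f = a2 - c - b*e"
  define r1 where "r1 = a3 - b*f - c*e"
  define r0 where "r0 = a4 - c*f"
  have id: "Pq a1 a2 a3 a4 z = (z^2 + of_real b * z + of_real c) * (z^2 + of_real e * z + of_real f)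
      + of_real r1 * z + of_real r0" for z
    by (simp add: Pq_def e_def f_def r1_def r0_def eval_nat_numeral algebra_simps)
  have bq: "of_real b = - (u + v)" using s by simp
  have cq: "of_real c = u * v" using p by simp
  have qu: "u^2 + of_real b * u + of_real c = 0"
    unfolding bq cq by (simp add: power2_eq_square algebra_simps)
  have qv: "v^2 + of_real b * v + of_real c = 0"
    unfolding bq cq by (simp add: power2_eq_square algebra_simps)
  have eu: "of_real r1 * u + of_real r0 = 0" using ru id[of u] qu by simp
  have ev: "of_real r1 * v + of_real r0 = 0" using rv id[of v] qv by simp
  have "of_real r1 * (u - v) = 0"
  proof -
    have "of_real r1 * (u - v) = (of_real r1 * u + of_real r0) - (of_real r1 * v + of_real r0)"
      by (simp add: algebra_simps)
    thus ?thesis using eu ev by simp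
  qed
  hence "r1 = 0" using neq by simp
  hence "r0 = 0" using eu by simp
  show ?thesis
    apply (rule exI[of _ b], rule exI[of _ c], rule exI[of _ e], rule exI[of _ f])
    using \<open>r1 = 0\<close> \<open>r0 = 0\<close> unfolding r1_def r0_def f_def e_def by (simp add: algebra_simps)
qed

lemma real_factor:
  fixes a1 a2 a3 a4 :: real
  shows "\<exists>b c e f. a1 = b+e \<and> a2 = c+f+b*e \<and> a3 = b*f+c*e \<and> a4 = c*f"
proof -
  obtain z1 where z1: "Pq a1 a2 a3 a4 z1 = 0"
    using quartic_root[of "of_real a1" "of_real a2" "of_real a3" "of_real a4"]
    unfolding Pq_def by blast
  show ?thesis
  proof (cases "Im z1 = 0")
    case False
    have c1: "Pq a1 a2 a3 a4 (cnj z1) = 0" using Pq_cnj[of a1 a2 a3 a4 z1] z1 by simp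
    have neq: "z1 \<noteq> cnj z1" using False by (metis cnj.simps(2) neg_equal_zero)
    show ?thesis
      apply (rule quad_div[OF neq _ _ z1 c1, of "-2 * Re z1" "Re z1 ^2 + Im z1 ^2"])
      by (simp_all add: complex_add_cnj complex_mult_cnj)
  next
    case True
    define x1 where "x1 = Re z1"
    have z1eq: "z1 = of_real x1" using True by (simp add: complex_eq_iff x1_def)
    have "complex_of_real (x1^4 + a1*x1^3 + a2*x1^2 + a3*x1 + a4) = 0"
      using z1 by (simp add: Pq_def z1eq)
    hence r1: "x1^4 + a1*x1^3 + a2*x1^2 + a3*x1 + a4 = 0" by (simp only: of_real_eq_0_iff)
    define g2 where "g2 = a1 + x1"
    define g1 where "g1 = a2 + x1*g2"
    define g0 where "g0 = a3 + x1*g1"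
    have e1: "a1 = g2 - x1" and e2: "a2 = g1 - x1*g2" and e3: "a3 = g0 - x1*g1"
      by (simp_all add: g2_def g1_def g0_def)
    have e4: "a4 = - (x1 * g0)"
      using r1 unfolding g0_def g1_def g2_def by (simp add: eval_nat_numeral algebra_simps)
    have facP: "Pq a1 a2 a3 a4 z = (z - of_real x1) * Cq g2 g1 g0 z" for z
      unfolding Pq_def Cq_def e1 e2 e3 e4 by (simp add: eval_nat_numeral algebra_simps)
    obtain z2 where z2: "Cq g2 g1 g0 z2 = 0"
      using cubic_root[of "of_real g2" "of_real g1" "of_real g0"] unfolding Cq_def by blast
    show ?thesis
    proof (cases "Im z2 = 0")
      case False
      have c2: "Cq g2 g1 g0 (cnj z2) = 0" using Cq_cnj[of g2 g1 g0 z2] z2 by simp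
      have neq: "z2 \<noteq> cnj z2" using False by (metis cnj.simps(2) neg_equal_zero)
      have p1: "Pq a1 a2 a3 a4 z2 = 0" using facP z2 by simp
      have p2: "Pq a1 a2 a3 a4 (cnj z2) = 0" using facP c2 by simp
      show ?thesis
        apply (rule quad_div[OF neq _ _ p1 p2, of "-2 * Re z2" "Re z2 ^2 + Im z2 ^2"])
        by (simp_all add: complex_add_cnj complex_mult_cnj)
    next
      case True
      define x2 where "x2 = Re z2"
      have z2eq: "z2 = of_real x2" using True by (simp add: complex_eq_iff x2_def)
      have "complex_of_real (x2^3 + g2*x2^2 + g1*x2 + g0) = 0"
        using z2 by (simp add: Cq_def z2eq)
      hence r2: "x2^3 + g2*x2^2 + g1*x2 + g0 = 0" by (simp only: of_real_eq_0_iff)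
      have e0: "g0 = - (x2^3 + g2*x2^2 + g1*x2)" using r2 by simp
      show ?thesis
        apply (rule exI[of _ "-(x1+x2)"], rule exI[of _ "x1*x2"], rule exI[of _ "g2 + x2"],
               rule exI[of _ "g1 + x2*(g2+x2)"])
        unfolding e1 e2 e3 e4 e0 by (simp add: eval_nat_numeral algebra_simps)
    qed
  qed
qed

lemma quad_stable:
  fixes b c :: real and z :: complex
  assumes "b > 0" "c > 0" and q: "z^2 + of_real b * z + of_real c = 0"
  shows "Re z < 0"
proof -
  have re: "Re z * Re z - Im z * Im z + b * Re z + c = 0"
    using arg_cong[OF q, of Re] by (simp add: power2_eq_square)
  have im: "2 * Re z * Im z + b * Im z = 0"
    using arg_cong[OF q, of Im] by (simp add: power2_eq_square algebra_simps)
  show ?thesis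
  proof (cases "Im z = 0")
    case True
    show ?thesis
    proof (rule ccontr)
      assume "\<not> Re z < 0"
      hence "Re z \<ge> 0" by simp
      hence "Re z * Re z + b * Re z + c > 0" using assms
        by (simp add: add_nonneg_pos zero_le_mult_iff)
      thus False using re True by simp
    qed
  next
    case False
    have "(2 * Re z + b) * Im z = 0" using im by (simp add: algebra_simps)
    hence "2 * Re z + b = 0" using False by simp
    thus ?thesis using assms by simp
  qed
qed

lemma quad_unstable:
  fixes b c :: real
  assumes "\<not> (b > 0 \<and> c > 0)"
  shows "\<exists>z::complex. z^2 + of_real b * z + of_real c = 0 \<and> Re z \<ge> 0"
proof (cases "b^2 - 4*c \<ge> 0")
  case True
  define s where "s = sqrt (b^2 - 4*c)"
  have s2: "s^2 = b^2 - 4*c" unfolding s_def using True by (rule real_sqrt_pow2)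
  have s0: "s \<ge> 0" using True by (simp add: s_def)
  have eqr: "((-b+s)/2)^2 + b*((-b+s)/2) + c = 0"
    using s2 by (simp add: power2_eq_square field_simps) 
  have nn: "-b + s \<ge> 0"
  proof (cases "b \<le> 0")
    case True then show ?thesis using s0 by simp
  next
    case False
    hence "c \<le> 0" using assms by auto
    hence "b^2 \<le> b^2 - 4*c" by simp
    hence "sqrt (b^2) \<le> s" unfolding s_def by (rule real_sqrt_le_mono)
    thus ?thesis by simp
  qed
  show ?thesis
    apply (rule exI[of _ "of_real ((-b+s)/2)"])
    using eqr nn by (simp del: of_real_add of_real_mult of_real_divide of_real_power
         add: of_real_add[symmetric] of_real_mult[symmetric] of_real_power[symmetric])
next
  case False
  define s where "s = sqrt (4*c - b^2)"
  have s2: "s^2 = 4*c - b^2" unfolding s_def using False by (intro real_sqrt_pow2) linarith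
  have "c > 0" using False by (smt (verit) zero_le_power2)
  hence b0: "b \<le> 0" using assms by auto
  show ?thesis
    apply (rule exI[of _ "Complex (-b/2) (s/2)"])
    using s2 b0 by (simp add: complex_eq_iff power2_eq_square field_simps)
qed

theorem mainTheorem4:
  fixes k11 k22 \<nu> d11 d12 d22 :: real
  assumes "k11 > 0" and "k22 > 0"
    and "pos_def (mat2 d11 d12 d12 d22)"
  shows "(\<forall>z::complex.
            det (mat (z^2) + mat z ** cmat (mat2 d11 d12 d12 d22)
                 + cmat (mat2 k11 0 0 k22 + mat2 0 \<nu> (-\<nu>) 0)) = 0
            \<longrightarrow> Re z < 0)
     \<longleftrightarrow> \<nu>^2 < (k11 - k22)^2 / 4
          - ((d11 - d22)^2 * (k11 - k22)^2
             - 4 * (k11 * d22 + k22 * d11) * (d11 * d22 - d12^2) * (d11 + d22))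
            / (4 * (d11 + d22)^2)"
proof -
  have pd: "\<And>x. x \<noteq> 0 \<Longrightarrow> x \<bullet> (mat2 d11 d12 d12 d22 *v x) > 0"
    using assms(3) unfolding pos_def_def by blast
  have n21: "(2::2) \<noteq> 1" by simp
  have d11: "d11 > 0"
  proof -
    define x where "x = (\<chi> i::2. if i = 1 then (1::real) else 0)"
    have "x $ 1 = 1" by (simp add: x_def)
    hence "x \<noteq> 0" by (metis zero_index zero_neq_one)
    moreover have "x \<bullet> (mat2 d11 d12 d12 d22 *v x) = d11"
      by (simp add: x_def inner_vec_def matrix_vector_mult_def sum_2 mat2_def)
    ultimately show ?thesis using pd by metis
  qed
  have d22: "d22 > 0"
  proof -
    define x where "x = (\<chi> i::2. if i = 1 then (0::real) else 1)"
    have "x $ 2 = 1" by (simp add: x_def)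
    hence "x \<noteq> 0" by (metis zero_index zero_neq_one)
    moreover have "x \<bullet> (mat2 d11 d12 d12 d22 *v x) = d22"
      by (simp add: x_def inner_vec_def matrix_vector_mult_def sum_2 mat2_def)
    ultimately show ?thesis using pd by metis
  qed
  have dD: "d11 * d22 - d12^2 > 0"
  proof -
    define x where "x = (\<chi> i::2. if i = 1 then - d12 else d11)"
    have "x $ 2 = d11" by (simp add: x_def)
    hence "x \<noteq> 0" using d11 by (metis zero_index less_irrefl)
    moreover have "x \<bullet> (mat2 d11 d12 d12 d22 *v x) = d11 * (d11 * d22 - d12^2)"
      by (simp add: x_def inner_vec_def matrix_vector_mult_def sum_2 mat2_def
          power2_eq_square algebra_simps)
    ultimately have "d11 * (d11 * d22 - d12^2) > 0" using pd by metis
    thus ?thesis using d11 by (simp add: zero_less_mult_iff)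
  qed
  define a1 where "a1 = d11 + d22"
  define a2 where "a2 = k11 + k22 + (d11 * d22 - d12^2)"
  define a3 where "a3 = d11 * k22 + d22 * k11"
  define a4 where "a4 = k11 * k22 + \<nu>^2"
  define H where "H = a1*a2*a3 - a3^2 - a1^2*a4"
  have a1p: "a1 > 0" using d11 d22 by (simp add: a1_def)
  have a3p: "a3 > 0" using d11 d22 assms by (simp add: a3_def add_pos_pos)
  have a4p: "a4 > 0" using assms by (simp add: a4_def add_pos_nonneg)
  have det: "det (mat (z^2) + mat z ** cmat (mat2 d11 d12 d12 d22)
                 + cmat (mat2 k11 0 0 k22 + mat2 0 \<nu> (-\<nu>) 0)) = Pq a1 a2 a3 a4 z" for z
    unfolding det_2
    by (simp add: mat2_def cmat_def matrix_matrix_mult_def mat_def sum_2 Pq_def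
        a1_def a2_def a3_def a4_def eval_nat_numeral algebra_simps)
  have formula: "(\<nu>^2 < (k11 - k22)^2 / 4
          - ((d11 - d22)^2 * (k11 - k22)^2
             - 4 * (k11 * d22 + k22 * d11) * (d11 * d22 - d12^2) * (d11 + d22))
            / (4 * (d11 + d22)^2)) \<longleftrightarrow> H > 0"
  proof -
    define X where "X = (d11 - d22)^2 * (k11 - k22)^2
             - 4 * (k11 * d22 + k22 * d11) * (d11 * d22 - d12^2) * (d11 + d22)"
    have t1: "4*a1^2*((k11-k22)^2/4) = a1^2*(k11-k22)^2" by simp
    have t2: "4*a1^2*(X/(4*(d11+d22)^2)) = X" using a1p unfolding a1_def by simp
    have t3: "a1^2*(k11-k22)^2 - X - 4*a1^2*\<nu>^2 = 4*H"
      unfolding X_def H_def a1_def a2_def a3_def a4_def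
      by (simp add: power2_eq_square algebra_simps)
    have "4*a1^2*((k11 - k22)^2 / 4 - X / (4 * (d11 + d22)^2) - \<nu>^2) = 4*H"
      using t1 t2 t3 by (simp add: right_diff_distrib)
    moreover have "4*a1^2 > 0" using a1p by simp
    ultimately have "((k11 - k22)^2 / 4 - X / (4 * (d11 + d22)^2) - \<nu>^2 > 0) \<longleftrightarrow> H > 0"
      by (metis zero_less_mult_iff mult_pos_pos zero_less_numeral not_less_iff_gr_or_eq mult_eq_0_iff) 
    thus ?thesis unfolding X_def by linarith
  qed
  obtain b c e f where fe1: "a1 = b+e" and fe2: "a2 = c+f+b*e" and fe3: "a3 = b*f+c*e"
    and fe4: "a4 = c*f"
    using real_factor[of a1 a2 a3 a4] by blast
  have fac: "Pq a1 a2 a3 a4 z = (z^2 + of_real b * z + of_real c) * (z^2 + of_real e * z + of_real f)"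
    for z
    unfolding Pq_def fe1 fe2 fe3 fe4 by (simp add: eval_nat_numeral algebra_simps)
  have Hid: "H = b*e*((c-f)^2 + a1*a3)"
    unfolding H_def fe1 fe2 fe3 fe4 by (simp add: eval_nat_numeral algebra_simps)
  have a13: "a1 * a3 > 0" using a1p a3p by simp
  have stab: "(\<forall>z. Pq a1 a2 a3 a4 z = 0 \<longrightarrow> Re z < 0) \<longleftrightarrow> H > 0"
  proof
    assume st: "\<forall>z. Pq a1 a2 a3 a4 z = 0 \<longrightarrow> Re z < 0"
    have bc: "b > 0 \<and> c > 0"
    proof (rule ccontr)
      assume "\<not> (b > 0 \<and> c > 0)"
      then obtain z where "z^2 + of_real b * z + of_real c = 0" "Re z \<ge> 0"
        using quad_unstable by blast
      thus False using st fac[of z] by force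
    qed
    have ef: "e > 0 \<and> f > 0"
    proof (rule ccontr)
      assume "\<not> (e > 0 \<and> f > 0)"
      then obtain z where "z^2 + of_real e * z + of_real f = 0" "Re z \<ge> 0"
        using quad_unstable by blast
      thus False using st fac[of z] by force
    qed
    have "(c-f)^2 + a1*a3 > 0" using a13 by (simp add: add_nonneg_pos)
    moreover have "b * e > 0" using bc ef by simp
    ultimately show "H > 0" unfolding Hid by simp
  next
    assume Hp: "H > 0"
    have "(c-f)^2 + a1*a3 > 0" using a13 by (simp add: add_nonneg_pos)
    hence be: "b * e > 0" using Hp unfolding Hid by (simp add: zero_less_mult_iff)
    have bp: "b > 0" and ep: "e > 0" using be a1p fe1 by (auto simp: zero_less_mult_iff)
    have cf: "c * f > 0" using a4p fe4 by simp
    have cp: "c > 0" and fp: "f > 0"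
    proof -
      have "\<not> (c < 0 \<and> f < 0)"
      proof
        assume "c < 0 \<and> f < 0"
        hence "b*f + c*e < 0" using bp ep
          by (simp add: add_neg_neg mult_pos_neg mult_neg_pos)
        thus False using a3p fe3 by simp
      qed
      thus "c > 0" "f > 0" using cf by (auto simp: zero_less_mult_iff)
    qed
    show "\<forall>z. Pq a1 a2 a3 a4 z = 0 \<longrightarrow> Re z < 0"
    proof (intro allI impI)
      fix z assume "Pq a1 a2 a3 a4 z = 0"
      hence "z^2 + of_real b * z + of_real c = 0 \<or> z^2 + of_real e * z + of_real f = 0"
        using fac[of z] by simp
      thus "Re z < 0" using quad_stable bp cp ep fp by blast
    qed
  qed
  show ?thesis unfolding det stab formula by simp
qed

end
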